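(* Let $p$ be an odd prime and $q\in\mathbb C_p$ with $|1-q|_p<p^{-1/(p-1)}$. For $n\in\mathbb Z_+$ and $x\in\mathbb Z_p$, $$E_{n,q}(x)=\frac{2}{(1-q)^n}\sum_{l=0}^n\sum_{k=l}^n(-1)^l(q-1)^{k-l}\binom nk_q s_{1,q}(k,l)\frac{q^{lx}}{1+q^l}.$$
   Context: $[x]_q=\frac{1-q^x}{1-q}$. The fermionic $p$-adic integral of a uniformly differentiable $f:\mathbb Z_p\to\mathbb C_p$ is $\int_{\mathbb Z_p}f(y)\,d\mu_{-1}(y)=\lim_{N\to\infty}\sum_{y=0}^{p^N-1}f(y)(-1)^y$. The $q$-Euler polynomials are $E_{n,q}(x)=\int_{\mathbb Z_p}[x+y]_q^n\,d\mu_{-1}(y)$. $[n]_q!=[n]_q\cdots[1]_q$ ($[0]_q!=1$), $\binom nk_q=\frac{[n]_q!}{[k]_q![n-k]_q!}$. The $q$-Stirling numbers of the first kind $s_{1,q}(k,l)$ are defined by $[x]_q[x-1]_q\cdots[x-k+1]_q=q^{-\binom k2}\sum_{l=0}^k s_{1,q}(k,l)[x]_q^l$, as an identity of polynomials in $[x]_q$ (using $[x-i]_q=q^{-i}([x]_q-[i]_q)$). *)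

theory Defs
  imports "HOL-Computational_Algebra.Polynomial" Complex_Main
begin

definition nonarch_absval :: "nat \<Rightarrow> ('a::field_char_0 \<Rightarrow> real) \<Rightarrow> bool" where
  "nonarch_absval p v \<longleftrightarrow>
     (\<forall>x. 0 \<le> v x) \<and> (\<forall>x. v x = 0 \<longleftrightarrow> x = 0) \<and>
     (\<forall>x y. v (x * y) = v x * v y) \<and>
     (\<forall>x y. v (x + y) \<le> max (v x) (v y)) \<and>
     v (of_nat p) = 1 / real p"

definition vconv :: "('a::field_char_0 \<Rightarrow> real) \<Rightarrow> (nat \<Rightarrow> 'a) \<Rightarrow> 'a \<Rightarrow> bool" where
  "vconv v X L \<longleftrightarrow> (\<lambda>k. v (X k - L)) \<longlonglongrightarrow> 0"

definition vcauchy :: "('a::field_char_0 \<Rightarrow> real) \<Rightarrow> (nat \<Rightarrow> 'a) \<Rightarrow> bool" where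
  "vcauchy v X \<longleftrightarrow> (\<forall>e>0. \<exists>N. \<forall>m\<ge>N. \<forall>n\<ge>N. v (X m - X n) < e)"

definition is_Cp :: "nat \<Rightarrow> ('a::field_char_0 \<Rightarrow> real) \<Rightarrow> bool" where
  "is_Cp p v \<longleftrightarrow> nonarch_absval p v \<and>
     (\<forall>X. vcauchy v X \<longrightarrow> (\<exists>L. vconv v X L)) \<and>
     (\<forall>P::'a poly. 0 < degree P \<longrightarrow> (\<exists>z. poly P z = 0))"

definition Zp :: "('a::field_char_0 \<Rightarrow> real) \<Rightarrow> 'a set" where
  "Zp v = {x. \<exists>X::nat \<Rightarrow> nat. vconv v (\<lambda>k. of_nat (X k)) x}"

text \<open>q^x for x in Z_p, as the continuous extension of n \<mapsto> q^n.\<close>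
definition qpow :: "('a::field_char_0 \<Rightarrow> real) \<Rightarrow> 'a \<Rightarrow> 'a \<Rightarrow> 'a" where
  "qpow v q x = (THE y. \<forall>X::nat \<Rightarrow> nat.
      vconv v (\<lambda>k. of_nat (X k)) x \<longrightarrow> vconv v (\<lambda>k. q ^ X k) y)"

definition qint :: "('a::field_char_0 \<Rightarrow> real) \<Rightarrow> 'a \<Rightarrow> 'a \<Rightarrow> 'a" where
  "qint v q x = (1 - qpow v q x) / (1 - q)"

definition qnat :: "'a::field \<Rightarrow> nat \<Rightarrow> 'a" where
  "qnat q n = (1 - q ^ n) / (1 - q)"

definition qfact :: "'a::field \<Rightarrow> nat \<Rightarrow> 'a" where
  "qfact q n = (\<Prod>i\<in>{1..n}. qnat q i)"

definition qbinom :: "'a::field \<Rightarrow> nat \<Rightarrow> nat \<Rightarrow> 'a" where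
  "qbinom q n k = qfact q n / (qfact q k * qfact q (n - k))"

text \<open>q-Stirling numbers of the first kind: coefficients s with
  prod_{i<k} q^{-i}(t - [i]_q) = q^{-binom k 2} sum_l s(k,l) t^l as polynomials in t.\<close>
definition qstirling1 :: "'a::field \<Rightarrow> nat \<Rightarrow> nat \<Rightarrow> 'a" where
  "qstirling1 q k l = coeff (smult (q ^ (k choose 2))
      (\<Prod>i<k. smult (inverse q ^ i) [:- qnat q i, 1:])) l"

definition fermionic_int :: "nat \<Rightarrow> ('a::field_char_0 \<Rightarrow> real) \<Rightarrow> (nat \<Rightarrow> 'a) \<Rightarrow> 'a" where
  "fermionic_int p v f = (THE L. vconv v (\<lambda>N. \<Sum>y<p ^ N. f y * (-1) ^ y) L)"

definition qEuler :: "nat \<Rightarrow> ('a::field_char_0 \<Rightarrow> real) \<Rightarrow> 'a \<Rightarrow> nat \<Rightarrow> 'a \<Rightarrow> 'a" where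
  "qEuler p v q n x = fermionic_int p v (\<lambda>y. qint v q (x + of_nat y) ^ n)"

end

theory Submission
  imports Defs "HOL-Computational_Algebra.Primes"
begin


locale nav =
  fixes p :: nat and v :: "'a::field_char_0 \<Rightarrow> real"
  assumes nav: "nonarch_absval p v" and pp: "prime p" and podd: "odd p"
begin

lemma nonneg[simp]: "0 \<le> v x" using nav unfolding nonarch_absval_def by blast
lemma zero_iff[simp]: "v x = 0 \<longleftrightarrow> x = 0" using nav unfolding nonarch_absval_def by blast
lemma vmult: "v (x*y) = v x * v y" using nav unfolding nonarch_absval_def by blast
lemma ultra: "v (x+y) \<le> max (v x) (v y)" using nav unfolding nonarch_absval_def by blast
lemma vp: "v (of_nat p) = 1 / real p" using nav unfolding nonarch_absval_def by blast

lemma p_gt1: "p > 1" using pp prime_gt_1_nat by blast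
lemma p_ge3: "p \<ge> 3"
proof -
  have "p \<ge> 2" using p_gt1 by simp
  moreover have "p \<noteq> 2" using podd by auto
  ultimately show ?thesis by simp
qed

lemma v_zero[simp]: "v 0 = 0" by simp

lemma v_one[simp]: "v 1 = 1"
proof -
  have "v 1 = v 1 * v 1" using vmult[of 1 1] by simp
  moreover have "v 1 \<noteq> 0" by simp
  ultimately show ?thesis by (metis mult_cancel_left1)
qed

lemma v_minus[simp]: "v (- x) = v x"
proof -
  have "v (-1) * v (-1) = 1" using vmult[of "-1" "-1"] by simp
  then have "v (-1) ^ 2 = 1" by (simp add: power2_eq_square)
  then have "v (-1) = 1 \<or> v (-1) = -1" unfolding power2_eq_1_iff .
  then have "v (-1) = 1" using nonneg[of "-1"] by linarith
  hence "v (-1 * x) = v x" using vmult[of "-1" x] by simp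
  thus ?thesis by simp
qed

lemma v_diff_sym: "v (x - y) = v (y - x)"
  by (metis minus_diff_eq v_minus)

lemma v_power: "v (x ^ n) = v x ^ n"
  by (induction n) (auto simp: vmult)

lemma v_inverse: "v (inverse x) = inverse (v x)"
proof (cases "x = 0")
  case False
  then have "v x * v (inverse x) = 1" using vmult[of x "inverse x"] by simp
  moreover have "v x \<noteq> 0" using False by simp
  ultimately show ?thesis by (simp add: field_simps)
qed simp

lemma v_divide: "v (x / y) = v x / v y"
  by (simp add: divide_inverse vmult v_inverse)

lemma ultra_diff: "v (x - y) \<le> max (v x) (v y)"
  using ultra[of x "-y"] by simp

lemma ultra_strict: assumes "v b < v a" shows "v (a + b) = v a"
proof -
  have "v (a+b) \<le> v a" using ultra[of a b] assms by simp
  moreover have "v a \<le> max (v (a+b)) (v b)" using ultra_diff[of "a+b" b] by simp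
  ultimately show ?thesis using assms by linarith
qed

lemma v_of_nat_le: "v (of_nat n) \<le> 1"
proof (induction n)
  case (Suc n)
  then show ?case using ultra[of 1 "of_nat n"] by simp
qed simp

lemma v_of_int_le: "v (of_int z) \<le> 1"
proof (cases z rule: int_cases)
  case (nonneg n) then show ?thesis using v_of_nat_le[of n] by simp
next
  case (neg n) then show ?thesis using v_of_nat_le[of "Suc n"] by (simp del: of_nat_Suc)
qed

lemma sum_le: assumes "finite A" "0 \<le> B" "\<And>k. k \<in> A \<Longrightarrow> v (f k) \<le> B"
  shows "v (sum f A) \<le> B"
  using assms
proof (induction A rule: finite_induct)
  case (insert x F)
  then have "max (v (f x)) (v (sum f F)) \<le> B" by simp
  moreover have "v (sum f (insert x F)) = v (f x + sum f F)" using insert by simp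
  ultimately show ?case using ultra[of "f x" "sum f F"] by linarith
qed simp

lemma sum_less: assumes "finite A" "0 < B" "\<And>k. k \<in> A \<Longrightarrow> v (f k) < B"
  shows "v (sum f A) < B"
  using assms
proof (induction A rule: finite_induct)
  case (insert x F)
  then have "max (v (f x)) (v (sum f F)) < B" by simp
  moreover have "v (sum f (insert x F)) = v (f x + sum f F)" using insert by simp
  ultimately show ?case using ultra[of "f x" "sum f F"] by linarith
qed simp

lemma v_of_nat_coprime: assumes "\<not> p dvd m" shows "v (of_nat m) = 1"
proof -
  have "coprime p m" using pp assms prime_imp_coprime by blast
  hence "gcd (int m) (int p) = 1" by (simp add: coprime_commute coprime_iff_gcd_eq_1 gcd_int_def)
  then obtain a b where ab: "a * int m + b * int p = 1" using bezout_int by metis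
  hence "(1::'a) = of_int a * of_nat m + of_int b * of_nat p"
    by (metis of_int_1 of_int_add of_int_mult of_int_of_nat_eq)
  hence "1 \<le> max (v (of_int a * of_nat m)) (v (of_int b * of_nat p))"
    using ultra by (metis v_one)
  moreover have "v (of_int b * of_nat p) \<le> 1 / real p"
    using v_of_int_le[of b] by (simp add: vmult vp divide_right_mono)
  moreover have "1 / real p < 1" using p_gt1 by simp
  moreover have "v (of_int a * of_nat m) \<le> v (of_nat m)"
    using v_of_int_le[of a] by (simp add: vmult mult_left_le_one_le)
  ultimately have "1 \<le> v (of_nat m)" by linarith
  thus ?thesis using v_of_nat_le[of m] by simp
qed

lemma v_of_nat_dvd: assumes "p dvd m" shows "v (of_nat m) \<le> 1 / real p"
proof -
  obtain r where "m = p * r" using assms by blast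
  then show ?thesis using v_of_nat_le[of r] by (simp add: vmult vp divide_right_mono)
qed

lemma v_two: "v 2 = 1"
proof -
  have "\<not> p dvd 2" using p_ge3 by (auto dest: dvd_imp_le)
  thus ?thesis using v_of_nat_coprime[of 2] by simp
qed

lemma v_of_nat_small: "v (of_nat m) \<ge> 1 / real p ^ N \<or> p ^ N dvd m"
proof (induction N)
  case 0 then show ?case by simp
next
  case (Suc N)
  show ?case
  proof (cases "p ^ N dvd m")
    case False
    then have "v (of_nat m) \<ge> 1 / real p ^ N" using Suc by auto
    moreover have "1 / real p ^ Suc N \<le> 1 / real p ^ N" using p_gt1
      by (simp add: frac_le)
    ultimately show ?thesis by linarith
  next
    case True
    then obtain r where r: "m = p ^ N * r" by blast
    show ?thesis
    proof (cases "p dvd r")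
      case True then show ?thesis using r by (simp add: mult_dvd_mono)
    next
      case False
      have "v (of_nat m) = (1 / real p) ^ N"
        using v_of_nat_coprime[OF False] r by (simp add: vmult v_power vp)
      then show ?thesis using p_gt1 by (simp add: power_one_over frac_le)
    qed
  qed
qed

end



locale navq = nav p v for p and v :: "'a::field_char_0 \<Rightarrow> real" +
  fixes q :: 'a
  assumes qsmall: "v (1 - q) < real p powr (- 1 / (real p - 1))"
begin

definition rho :: real where "rho = real p powr (- 1 / (real p - 1))"

lemma rho_pos: "0 < rho" unfolding rho_def using p_gt1 by simp

lemma rho_lt1: "rho < 1"
  unfolding rho_def using p_gt1 by (simp add: powr_less_one)

lemma rho_pow: "rho ^ (p - 1) = 1 / real p"
proof -
  have "rho ^ (p - 1) = real p powr (- 1 / (real p - 1) * real (p - 1))"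
    unfolding rho_def using p_gt1 by (simp add: powr_realpow[symmetric] powr_powr)
  also have "- 1 / (real p - 1) * real (p - 1) = -1" using p_gt1 by (simp add: of_nat_diff)
  finally show ?thesis using p_gt1 by (simp add: powr_minus_divide)
qed

lemma vq1: "v (1 - q) < 1" using qsmall rho_lt1 rho_def by simp

lemma vq1_pow: "v (1 - q) ^ (p - 1) < 1 / real p"
proof -
  have "v (1 - q) ^ (p - 1) < rho ^ (p - 1)"
    by (rule power_strict_mono) (use qsmall rho_def p_gt1 in \<open>auto\<close>)
  thus ?thesis using rho_pow by simp
qed

lemma vq[simp]: "v q = 1"
proof -
  have "v (1 + - (1 - q)) = v 1" by (rule ultra_strict) (use vq1 in \<open>metis v_minus v_one\<close>)
  thus ?thesis by simp
qed

lemma q_nz: "q \<noteq> 0" using vq by (metis zero_iff zero_neq_one)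

lemma vqpow[simp]: "v (q ^ j) = 1" by (simp add: v_power)

end

context nav begin

lemma one_minus_pow_le: assumes "v w \<le> 1" shows "v (1 - w ^ j) \<le> v (1 - w)"
proof -
  have "v (\<Sum>i<j. w ^ i) \<le> 1"
    by (rule sum_le) (use assms in \<open>auto simp: v_power power_le_one\<close>)
  then show ?thesis unfolding one_diff_power_eq[of w j] vmult
    by (simp add: mult_left_le)
qed

lemma mid_lemma:
  assumes vd: "0 < v d" "v d < 1" and k2: "2 \<le> k" "k < p"
  shows "v (of_nat (p choose k) * (- d) ^ k * 1 ^ (p - k)) < v d / real p"
proof -
  have "p dvd (p choose k)" by (rule dvd_choose_prime) (use k2 pp in auto)
  hence c: "v (of_nat (p choose k)) \<le> 1 / real p" by (rule v_of_nat_dvd)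
  have "v d ^ k \<le> v d ^ 2" by (rule power_decreasing) (use k2 vd in \<open>auto\<close>)
  also have "\<dots> < v d" using vd by (simp add: power2_eq_square)
  finally have dk: "v d ^ k < v d" .
  have "v (of_nat (p choose k) * (- d) ^ k * 1 ^ (p - k)) = v (of_nat (p choose k)) * v d ^ k"
    by (simp add: vmult v_power)
  also have "\<dots> \<le> 1 / real p * v d ^ k" using mult_right_mono[OF c, of "v d ^ k"] by simp
  also have "\<dots> < 1 / real p * v d" by (rule mult_strict_left_mono) (use dk p_gt1 in auto)
  finally show ?thesis by simp
qed

lemma pth_root: assumes "u ^ p = 1" "v (1 - u) < 1" "v (1 - u) ^ (p - 1) < 1 / real p"
  shows "u = 1"
proof (rule ccontr)
  assume "u \<noteq> 1"
  define d where "d = 1 - u"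
  have dnz: "d \<noteq> 0" using \<open>u \<noteq> 1\<close> d_def by simp
  have "v d \<noteq> 0" using dnz by simp
  hence vd: "0 < v d" "v d < 1" using assms(2) nonneg[of d] unfolding d_def by linarith+
  define f where "f k = of_nat (p choose k) * (- d) ^ k * 1 ^ (p - k)" for k
  have "1 = (- d + 1) ^ p" using assms(1) d_def by simp
  also have "\<dots> = sum f {..p}" unfolding f_def by (rule binomial_ring)
  also have "\<dots> = sum f ({..p} - {0,1,p}) + sum f {0,1,p}"
    using p_gt1 by (intro sum.subset_diff) auto
  also have "sum f {0,1,p} = f 0 + f 1 + f p" using p_ge3 by simp
  finally have eq: "0 = f 1 + (sum f ({..p} - {0,1,p}) + f p)"
    by (simp add: f_def algebra_simps)
  define B where "B = v d / real p"
  have Bpos: "0 < B" using vd p_gt1 B_def by simp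
  have vf1: "v (f 1) = B" unfolding f_def B_def using p_gt1 by (simp add: vmult vp)
  have mid: "v (f k) < B" if k: "k \<in> {..p} - {0,1,p}" for k
  proof -
    from k have k2: "2 \<le> k" "k < p" by auto
    show ?thesis using mid_lemma[OF vd k2] unfolding f_def B_def .
  qed
  have fin: "finite ({..p} - {0,1,p})" by simp
  have "v (sum f ({..p} - {0,1,p})) < B"
  proof (rule sum_less)
    show "finite ({..p} - {0,1,p})" by (rule fin)
    show "0 < B" by (rule Bpos)
    fix k assume "k \<in> {..p} - {0,1,p}"
    thus "v (f k) < B" by (rule mid)
  qed
  moreover have "v (f p) < B"
  proof -
    obtain m where m: "p = Suc m" using p_gt1 by (cases p) auto
    have "v (f p) = v d ^ p" unfolding f_def by (simp add: vmult v_power)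
    also have "\<dots> = v d * v d ^ (p - 1)" unfolding m by simp
    finally have "v (f p) = v d * v d ^ (p - 1)" .
    also have "v d ^ (p - 1) < 1 / real p" using assms(3) d_def by simp
    hence "v d * v d ^ (p - 1) < v d * (1 / real p)" by (rule mult_strict_left_mono) (use vd in auto)
    finally show ?thesis by (simp add: B_def)
  qed
  ultimately have "v (sum f ({..p} - {0,1,p}) + f p) < B"
    using ultra[of "sum f ({..p} - {0,1,p})" "f p"] by (meson le_less_trans max_less_iff_conj)
  hence "v (f 1 + (sum f ({..p} - {0,1,p}) + f p)) = B" using vf1 ultra_strict by simp
  with eq Bpos show False by simp
qed

end

context navq begin

lemma no_root: assumes "q ^ m = 1" "0 < m" shows "q = 1"
  using assms
proof (induction m rule: less_induct)
  case (less m)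
  show ?case
  proof (rule ccontr)
    assume qn1: "q \<noteq> 1"
    show False
    proof (cases "p dvd m")
      case False
      have "(1 - q) * (\<Sum>j<m. q ^ j) = 0" using one_diff_power_eq[of q m] less.prems by simp
      hence S0: "(\<Sum>j<m. q ^ j) = 0" using qn1 by simp
      have "(\<Sum>j<m. q ^ j) = of_nat m + (\<Sum>j<m. q ^ j - 1)" by (simp add: sum_subtractf)
      moreover have "v (\<Sum>j<m. q ^ j - 1) < 1"
      proof -
        have "v (\<Sum>j<m. q ^ j - 1) \<le> v (1 - q)"
          by (rule sum_le) (auto simp: v_diff_sym[of _ 1] intro: one_minus_pow_le)
        thus ?thesis using vq1 by simp
      qed
      ultimately have "v (\<Sum>j<m. q ^ j) = 1" using ultra_strict v_of_nat_coprime[OF False] by simp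
      with S0 show False by simp
    next
      case True
      then obtain r where r: "m = p * r" by blast
      have r0: "0 < r" "r < m" using r less.prems p_gt1 by auto
      have up: "(q ^ r) ^ p = 1" using less.prems r by (simp add: power_mult[symmetric] mult.commute)
      have le: "v (1 - q ^ r) \<le> v (1 - q)" by (rule one_minus_pow_le) simp
      hence "v (1 - q ^ r) < 1" using vq1 by simp
      moreover have "v (1 - q ^ r) ^ (p - 1) < 1 / real p"
        using le vq1_pow power_mono[OF le, of "p - 1"] by simp
      ultimately have "q ^ r = 1" using up pth_root by blast
      then show False using less.IH[OF r0(2) _ r0(1)] qn1 by simp
    qed
  qed
qed

definition c0 :: real where "c0 = max (1 / real p) (v (1 - q))"

lemma c0_lt1: "c0 < 1" using vq1 p_gt1 by (auto simp: c0_def)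
lemma c0_nn: "0 \<le> c0" using nonneg[of "1-q"] by (simp add: c0_def le_max_iff_disj)

lemma pow_pN: "v (1 - q ^ (p ^ N)) \<le> c0 ^ N"
proof (induction N)
  case 0 then show ?case using vq1 by simp
next
  case (Suc N)
  define w where "w = q ^ (p ^ N)"
  have vw: "v w = 1" by (simp add: w_def)
  have "(\<Sum>j<p. w ^ j) = of_nat p + (\<Sum>j<p. w ^ j - 1)" by (simp add: sum_subtractf)
  moreover have "v (\<Sum>j<p. w ^ j - 1) \<le> c0"
  proof -
    have "v (\<Sum>j<p. w ^ j - 1) \<le> v (1 - w)"
      by (rule sum_le) (use vw in \<open>auto simp: v_diff_sym[of _ 1] intro: one_minus_pow_le\<close>)
    also have "\<dots> \<le> v (1 - q)" unfolding w_def by (rule one_minus_pow_le) simp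
    finally show ?thesis by (simp add: c0_def)
  qed
  moreover have "v (of_nat p :: 'a) \<le> c0" by (simp add: vp c0_def)
  ultimately have S: "v (\<Sum>j<p. w ^ j) \<le> c0" using ultra[of "of_nat p" "\<Sum>j<p. w ^ j - 1"]
    by simp
  have "q ^ (p ^ Suc N) = w ^ p" by (simp add: w_def power_mult[symmetric] mult.commute)
  hence "v (1 - q ^ (p ^ Suc N)) = v (1 - w) * v (\<Sum>j<p. w ^ j)"
    by (simp add: one_diff_power_eq vmult)
  also have "\<dots> \<le> c0 ^ N * c0" by (rule mult_mono) (use Suc S in \<open>auto simp: w_def c0_nn\<close>)
  finally show ?case by (simp add: mult.commute)
qed

lemma cont_nat: assumes "v (of_nat a - of_nat b :: 'a) < 1 / real p ^ N"
  shows "v (q ^ a - q ^ b) \<le> c0 ^ N"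
proof -
  have main: "v (q ^ a - q ^ b) \<le> c0 ^ N" if ab: "b \<le> a" "v (of_nat a - of_nat b :: 'a) < 1 / real p ^ N" for a b
  proof -
    obtain m where m: "a = b + m" using ab le_Suc_ex by blast
    have "v (of_nat m :: 'a) < 1 / real p ^ N" using ab m by simp
    hence "p ^ N dvd m" using v_of_nat_small[of N m] by linarith
    then obtain r where r: "m = p ^ N * r" by blast
    have qm: "q ^ m = (q ^ (p ^ N)) ^ r" unfolding r by (rule power_mult)
    have "q ^ a - q ^ b = - (q ^ b * (1 - q ^ m))"
      by (simp add: m power_add algebra_simps)
    hence "q ^ a - q ^ b = - (q ^ b * (1 - (q ^ (p ^ N)) ^ r))" by (simp only: qm)
    hence "v (q ^ a - q ^ b) = v (1 - (q ^ (p ^ N)) ^ r)" by (simp add: vmult)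
    also have "\<dots> \<le> v (1 - q ^ (p ^ N))" by (rule one_minus_pow_le) simp
    also have "\<dots> \<le> c0 ^ N" by (rule pow_pN)
    finally show ?thesis .
  qed
  show ?thesis
  proof (cases "b \<le> a")
    case True then show ?thesis using main assms by blast
  next
    case False
    then have "v (q ^ b - q ^ a) \<le> c0 ^ N" using main assms v_diff_sym by (metis nat_le_linear)
    then show ?thesis using v_diff_sym by metis
  qed
qed

end



context nav begin

lemma ultra_plus: "v (x + y) \<le> v x + v y"
  using ultra[of x y] nonneg[of x] nonneg[of y] by linarith

lemma ultra_minus: "v (x - y) \<le> v x + v y"
  using ultra_plus[of x "-y"] by simp

lemma vconv_iff: "vconv v X L \<longleftrightarrow> (\<forall>e>0. \<exists>N. \<forall>k\<ge>N. v (X k - L) < e)"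
  unfolding vconv_def LIMSEQ_iff by simp

lemma vconv_bound:
  assumes "\<And>k. v (Y k - M) \<le> g k" "g \<longlonglongrightarrow> 0"
  shows "vconv v Y M"
proof -
  have e1: "eventually (\<lambda>k. 0 \<le> v (Y k - M)) sequentially" by (rule always_eventually) simp
  have e2: "eventually (\<lambda>k. v (Y k - M) \<le> g k) sequentially" by (rule always_eventually) (simp add: assms(1))
  show ?thesis unfolding vconv_def by (rule real_tendsto_sandwich[OF e1 e2 tendsto_const assms(2)])
qed

lemma vconv_tendsto: "vconv v X L \<Longrightarrow> (\<lambda>k. v (X k - L)) \<longlonglongrightarrow> 0"
  unfolding vconv_def .

lemma vconv_unique: assumes "vconv v X a" "vconv v X b" shows "a = b"
proof -
  have "(\<lambda>k. v (X k - a) + v (X k - b)) \<longlonglongrightarrow> 0 + 0"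
    by (rule tendsto_add) (use assms in \<open>auto simp: vconv_def\<close>)
  moreover have "v (a - b) \<le> v (X k - a) + v (X k - b)" for k
    using ultra_minus[of "X k - b" "X k - a"] by simp
  ultimately have "(\<lambda>k. v (a - b)) \<longlonglongrightarrow> 0"
  proof -
    assume lim: "(\<lambda>k. v (X k - a) + v (X k - b)) \<longlonglongrightarrow> 0 + 0"
      and le: "\<And>k. v (a - b) \<le> v (X k - a) + v (X k - b)"
    have e1: "eventually (\<lambda>k. 0 \<le> v (a - b)) sequentially" by (rule always_eventually) simp
    have e2: "eventually (\<lambda>k. v (a - b) \<le> v (X k - a) + v (X k - b)) sequentially"
      by (rule always_eventually) (rule allI, rule le)
    show ?thesis using real_tendsto_sandwich[OF e1 e2 tendsto_const] lim by simp
  qed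
  hence "v (a - b) = 0" using LIMSEQ_const_iff by blast
  thus ?thesis by simp
qed

lemma vconv_const: "vconv v (\<lambda>k. c) c" unfolding vconv_def by simp

lemma vconv_add: assumes "vconv v X a" "vconv v Y b" shows "vconv v (\<lambda>k. X k + Y k) (a + b)"
proof (rule vconv_bound)
  show "v (X k + Y k - (a + b)) \<le> v (X k - a) + v (Y k - b)" for k
  proof -
    have eq: "X k + Y k - (a + b) = (X k - a) + (Y k - b)" by simp
    show ?thesis unfolding eq by (rule ultra_plus)
  qed
  show "(\<lambda>k. v (X k - a) + v (Y k - b)) \<longlonglongrightarrow> 0"
    using tendsto_add[OF assms[unfolded vconv_def]] by simp
qed

lemma vconv_mult: assumes "vconv v X a" "vconv v Y b" shows "vconv v (\<lambda>k. X k * Y k) (a * b)"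
proof (rule vconv_bound)
  show "v (X k * Y k - a * b) \<le> (v (X k - a) + v a) * v (Y k - b) + v b * v (X k - a)" for k
  proof -
    have "X k * Y k - a * b = X k * (Y k - b) + b * (X k - a)" by (simp add: algebra_simps)
    hence "v (X k * Y k - a * b) \<le> v (X k) * v (Y k - b) + v b * v (X k - a)"
      using ultra_plus[of "X k * (Y k - b)" "b * (X k - a)"] by (simp add: vmult)
    moreover have "v (X k) \<le> v (X k - a) + v a" using ultra_plus[of "X k - a" a] by simp
    hence "v (X k) * v (Y k - b) \<le> (v (X k - a) + v a) * v (Y k - b)" by (rule mult_right_mono) simp
    ultimately show ?thesis by linarith
  qed
  show "(\<lambda>k. (v (X k - a) + v a) * v (Y k - b) + v b * v (X k - a)) \<longlonglongrightarrow> 0"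
  proof -
    have h1: "(\<lambda>k. v (X k - a)) \<longlonglongrightarrow> 0" and h2: "(\<lambda>k. v (Y k - b)) \<longlonglongrightarrow> 0"
      using assms unfolding vconv_def by auto
    show ?thesis
      using tendsto_add[OF tendsto_mult[OF tendsto_add[OF h1 tendsto_const[of "v a"]] h2] tendsto_mult[OF tendsto_const[of "v b"] h1]]
      by simp
  qed
qed

lemma vconv_power: assumes "vconv v X a" shows "vconv v (\<lambda>k. X k ^ n) (a ^ n)"
proof (induction n)
  case 0 then show ?case by (simp add: vconv_const)
next
  case (Suc n)
  have "vconv v (\<lambda>k. X k * X k ^ n) (a * a ^ n)" by (rule vconv_mult[OF assms Suc.IH])
  thus ?case by simp
qed

lemma vconv_sum: assumes "finite A" "\<And>i. i \<in> A \<Longrightarrow> vconv v (X i) (a i)"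
  shows "vconv v (\<lambda>k. \<Sum>i\<in>A. X i k) (\<Sum>i\<in>A. a i)"
  using assms
proof (induction A rule: finite_induct)
  case empty then show ?case by (simp add: vconv_const)
next
  case (insert x F)
  have "vconv v (\<lambda>k. X x k + (\<Sum>i\<in>F. X i k)) (a x + (\<Sum>i\<in>F. a i))"
    by (rule vconv_add) (use insert in \<open>auto\<close>)
  thus ?case using insert by simp
qed

lemma vconv_cmult: assumes "vconv v X a" shows "vconv v (\<lambda>k. c * X k) (c * a)"
  by (rule vconv_mult[OF vconv_const assms])

end

context navq begin

lemma small_pow: assumes "0 < e" obtains N where "c0 ^ N < e"
  using real_arch_pow_inv[OF assms c0_lt1] by blast

lemma qcont: assumes "vconv v (\<lambda>k. of_nat (X k)) x" "vconv v (\<lambda>k. of_nat (Y k)) x"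
  shows "vconv v (\<lambda>k. q ^ (X k) - q ^ (Y k)) 0"
  unfolding vconv_iff
proof (intro allI impI)
  fix e :: real assume "0 < e"
  then obtain N where N: "c0 ^ N < e" using small_pow by blast
  have dpos: "0 < 1 / real p ^ N" using p_gt1 by simp
  obtain K1 where K1: "\<forall>k\<ge>K1. v (of_nat (X k) - x) < 1 / real p ^ N"
    using assms(1) dpos unfolding vconv_iff by blast
  obtain K2 where K2: "\<forall>k\<ge>K2. v (of_nat (Y k) - x) < 1 / real p ^ N"
    using assms(2) dpos unfolding vconv_iff by blast
  have "v (q ^ X k - q ^ Y k - 0) < e" if k: "k \<ge> max K1 K2" for k
  proof -
    have eq: "of_nat (X k) - of_nat (Y k) = (of_nat (X k) - x) - (of_nat (Y k) - x)" by simp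
    have "v (of_nat (X k) - of_nat (Y k) :: 'a) \<le> max (v (of_nat (X k) - x)) (v (of_nat (Y k) - x))"
      unfolding eq by (rule ultra_diff)
    also have "\<dots> < 1 / real p ^ N" using K1 K2 k by simp
    finally have "v (q ^ X k - q ^ Y k) \<le> c0 ^ N" by (rule cont_nat)
    thus ?thesis using N by simp
  qed
  thus "\<exists>K. \<forall>k\<ge>K. v (q ^ X k - q ^ Y k - 0) < e" by blast
qed

lemma qcauchy: assumes "vconv v (\<lambda>k. of_nat (X k)) x"
  shows "vcauchy v (\<lambda>k. q ^ (X k))"
  unfolding vcauchy_def
proof (intro allI impI)
  fix e :: real assume "0 < e"
  then obtain N where N: "c0 ^ N < e" using small_pow by blast
  have dpos: "0 < 1 / real p ^ N" using p_gt1 by simp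
  obtain K where K: "\<forall>k\<ge>K. v (of_nat (X k) - x) < 1 / real p ^ N"
    using assms(1) dpos unfolding vconv_iff by blast
  have "v (q ^ X m - q ^ X n) < e" if "m \<ge> K" "n \<ge> K" for m n
  proof -
    have eq: "of_nat (X m) - of_nat (X n) = (of_nat (X m) - x) - (of_nat (X n) - x)" by simp
    have "v (of_nat (X m) - of_nat (X n) :: 'a) \<le> max (v (of_nat (X m) - x)) (v (of_nat (X n) - x))"
      unfolding eq by (rule ultra_diff)
    also have "\<dots> < 1 / real p ^ N" using K that by simp
    finally have "v (q ^ X m - q ^ X n) \<le> c0 ^ N" by (rule cont_nat)
    thus ?thesis using N by simp
  qed
  thus "\<exists>K. \<forall>m\<ge>K. \<forall>n\<ge>K. v (q ^ X m - q ^ X n) < e" by blast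
qed

lemma qpow_conv:
  assumes complete: "\<forall>X. vcauchy v X \<longrightarrow> (\<exists>L. vconv v X L)"
    and X: "vconv v (\<lambda>k. of_nat (X k)) x"
  shows "vconv v (\<lambda>k. q ^ (X k)) (qpow v q x)"
proof -
  obtain y0 where y0: "vconv v (\<lambda>k. q ^ (X k)) y0" using complete qcauchy[OF X] by blast
  have P: "\<forall>Y::nat\<Rightarrow>nat. vconv v (\<lambda>k. of_nat (Y k)) x \<longrightarrow> vconv v (\<lambda>k. q ^ Y k) y0"
  proof (intro allI impI)
    fix Y :: "nat \<Rightarrow> nat" assume Y: "vconv v (\<lambda>k. of_nat (Y k)) x"
    have "vconv v (\<lambda>k. (q ^ Y k - q ^ X k) + q ^ X k) (0 + y0)"
      using vconv_add[OF qcont[OF Y X] y0] .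
    thus "vconv v (\<lambda>k. q ^ Y k) y0" by simp
  qed
  have "qpow v q x = y0" unfolding qpow_def
  proof (rule the_equality)
    fix y assume "\<forall>Y::nat\<Rightarrow>nat. vconv v (\<lambda>k. of_nat (Y k)) x \<longrightarrow> vconv v (\<lambda>k. q ^ Y k) y"
    hence "vconv v (\<lambda>k. q ^ (X k)) y" using X by blast
    thus "y = y0" using y0 vconv_unique by blast
  qed (rule P)
  thus ?thesis using y0 by simp
qed

lemma qpow_add_nat:
  assumes complete: "\<forall>X. vcauchy v X \<longrightarrow> (\<exists>L. vconv v X L)"
    and x: "x \<in> Zp v"
  shows "qpow v q (x + of_nat y) = qpow v q x * q ^ y"
proof -
  obtain X where X: "vconv v (\<lambda>k. of_nat (X k)) x" using x unfolding Zp_def by blast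
  have X': "vconv v (\<lambda>k. of_nat (X k + y)) (x + of_nat y)"
  proof (rule vconv_bound)
    show "v (of_nat (X k + y) - (x + of_nat y)) \<le> v (of_nat (X k) - x)" for k by simp
  qed (use X in \<open>simp add: vconv_def\<close>)
  have "vconv v (\<lambda>k. q ^ (X k + y)) (qpow v q (x + of_nat y))" by (rule qpow_conv[OF complete X'])
  moreover have "vconv v (\<lambda>k. q ^ (X k + y)) (qpow v q x * q ^ y)"
    using vconv_mult[OF qpow_conv[OF complete X] vconv_const[of "q ^ y"]] by (simp add: power_add)
  ultimately show ?thesis by (rule vconv_unique)
qed

lemma qpow_mult_nat:
  assumes complete: "\<forall>X. vcauchy v X \<longrightarrow> (\<exists>L. vconv v X L)"
    and x: "x \<in> Zp v"
  shows "qpow v q (of_nat l * x) = qpow v q x ^ l"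
proof -
  obtain X where X: "vconv v (\<lambda>k. of_nat (X k)) x" using x unfolding Zp_def by blast
  have X': "vconv v (\<lambda>k. of_nat (l * X k)) (of_nat l * x)"
  proof (rule vconv_bound)
    show "v (of_nat (l * X k) - of_nat l * x) \<le> v (of_nat (X k) - x)" for k
    proof -
      have "of_nat (l * X k) - of_nat l * x = of_nat l * (of_nat (X k) - x)" by (simp add: algebra_simps)
      moreover have "v (of_nat l :: 'a) * v (of_nat (X k) - x) \<le> v (of_nat (X k) - x)"
        by (rule mult_left_le_one_le) (use v_of_nat_le[of l] in \<open>auto\<close>)
      ultimately show ?thesis by (simp only: vmult)
    qed
  qed (use X in \<open>simp add: vconv_def\<close>)
  have "vconv v (\<lambda>k. q ^ (l * X k)) (qpow v q (of_nat l * x))" by (rule qpow_conv[OF complete X'])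
  moreover have "vconv v (\<lambda>k. q ^ (l * X k)) (qpow v q x ^ l)"
  proof -
    have e: "q ^ (l * X k) = (q ^ X k) ^ l" for k by (metis power_mult mult.commute)
    show ?thesis unfolding e by (rule vconv_power[OF qpow_conv[OF complete X]])
  qed
  ultimately show ?thesis by (rule vconv_unique)
qed

end



fun gb :: "'a::field \<Rightarrow> nat \<Rightarrow> nat \<Rightarrow> 'a" where
  "gb q 0 k = (if k = 0 then 1 else 0)"
| "gb q (Suc n) 0 = 1"
| "gb q (Suc n) (Suc k) = gb q n k + q ^ Suc k * gb q n (Suc k)"

lemma gb_zero: "n < k \<Longrightarrow> gb q n k = 0"
proof (induction n arbitrary: k)
  case (Suc n) then show ?case by (cases k) auto
qed simp

lemma gb_n0[simp]: "gb q n 0 = 1" by (cases n) auto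

lemma qfact_0[simp]: "qfact q 0 = 1" by (simp add: qfact_def)

lemma qfact_Suc: "qfact q (Suc n) = qnat q (Suc n) * qfact q n"
  unfolding qfact_def by (simp add: atLeastAtMostSuc_conv)

lemma qnat_0[simp]: "qnat q 0 = 0" by (simp add: qnat_def)

lemma qnat_add: assumes "q \<noteq> 1" shows "qnat q (a + b) = qnat q a + q ^ a * qnat q b"
proof -
  have "1 - q \<noteq> 0" using assms by simp
  thus ?thesis unfolding qnat_def by (simp add: field_simps power_add)
qed

lemma qfact_gb: assumes "q \<noteq> 1" "k \<le> n"
  shows "qfact q n = gb q n k * qfact q k * qfact q (n - k)"
  using assms(2)
proof (induction n arbitrary: k)
  case 0 then show ?case by simp
next
  case (Suc n)
  show ?case
  proof (cases k)
    case 0 then show ?thesis by simp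
  next
    case (Suc j)
    with Suc.prems have jn: "j \<le> n" by simp
    have split: "qnat q (Suc n) = qnat q (Suc j) + q ^ Suc j * qnat q (n - j)"
      using qnat_add[OF assms(1), of "Suc j" "n - j"] jn by simp
    have t1: "qnat q (Suc j) * qfact q n = gb q n j * qfact q (Suc j) * qfact q (n - j)"
      using Suc.IH[OF jn] by (simp add: qfact_Suc)
    have t2: "qnat q (n - j) * qfact q n = gb q n (Suc j) * qfact q (Suc j) * qfact q (n - j)"
    proof (cases "j < n")
      case True
      hence e: "n - j = Suc (n - Suc j)" by simp
      show ?thesis using Suc.IH[of "Suc j"] True
        by (simp add: e qfact_Suc)
    next
      case False
      hence "j = n" using jn by simp
      thus ?thesis by (simp add: gb_zero)
    qed
    have "qfact q (Suc n) = qnat q (Suc j) * qfact q n + q ^ Suc j * (qnat q (n - j) * qfact q n)"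
      by (simp add: qfact_Suc split algebra_simps)
    also have "\<dots> = gb q n j * qfact q (Suc j) * qfact q (n - j) + q ^ Suc j * (gb q n (Suc j) * qfact q (Suc j) * qfact q (n - j))"
      by (simp only: t1 t2)
    also have "\<dots> = (gb q n j + q ^ Suc j * gb q n (Suc j)) * qfact q (Suc j) * qfact q (n - j)"
      by (simp add: algebra_simps)
    finally show ?thesis using Suc by simp
  qed
qed

lemma qfact_nz: assumes "q \<noteq> 1" "\<forall>i\<in>{1..n}. q ^ i \<noteq> 1" "k \<le> n" shows "qfact q k \<noteq> 0"
proof -
  have "qnat q i \<noteq> 0" if "i \<in> {1..k}" for i
    using assms that unfolding qnat_def by auto
  thus ?thesis unfolding qfact_def by simp
qed

lemma qbinom_gb: assumes "q \<noteq> 1" "\<forall>i\<in>{1..n}. q ^ i \<noteq> 1" "k \<le> n"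
  shows "qbinom q n k = gb q n k"
proof -
  have "qfact q k \<noteq> 0" "qfact q (n - k) \<noteq> 0" using qfact_nz[OF assms(1,2)] assms(3) by auto
  thus ?thesis unfolding qbinom_def qfact_gb[OF assms(1,3)] by simp
qed

definition Qk :: "'a::field \<Rightarrow> 'a poly \<Rightarrow> nat \<Rightarrow> 'a poly" where
  "Qk q z k = (\<Prod>i<k. z - [:q ^ i:])"

lemma Qk_Suc: "Qk q z (Suc k) = Qk q z k * (z - [:q ^ k:])"
  unfolding Qk_def by simp

lemma gauss_poly: "(\<Sum>k\<le>n. smult (gb q n k) (Qk q z k)) = z ^ n"
proof (induction n)
  case 0 then show ?case by (simp add: Qk_def)
next
  case (Suc n)
  have zQ: "z * Qk q z k = Qk q z (Suc k) + smult (q ^ k) (Qk q z k)" for k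
  proof -
    have c: "Qk q z k * [:q ^ k:] = smult (q ^ k) (Qk q z k)" by (subst mult.commute) simp
    show ?thesis unfolding Qk_Suc right_diff_distrib c by (simp add: mult.commute)
  qed
  have "z ^ Suc n = z * (\<Sum>k\<le>n. smult (gb q n k) (Qk q z k))" using Suc by simp
  also have "\<dots> = (\<Sum>k\<le>n. smult (gb q n k) (Qk q z (Suc k))) + (\<Sum>k\<le>n. smult (gb q n k * q ^ k) (Qk q z k))"
    by (simp add: sum_distrib_left zQ smult_add_right sum.distrib mult.commute)
  also have "(\<Sum>k\<le>n. smult (gb q n k * q ^ k) (Qk q z k)) = (\<Sum>k\<le>Suc n. smult (gb q n k * q ^ k) (Qk q z k))"
    by (simp add: gb_zero)
  also have "\<dots> = Qk q z 0 + (\<Sum>k\<le>n. smult (gb q n (Suc k) * q ^ Suc k) (Qk q z (Suc k)))"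
    by (subst sum.atMost_Suc_shift) simp
  finally have "z ^ Suc n = Qk q z 0 + (\<Sum>k\<le>n. smult (gb q n k) (Qk q z (Suc k)) + smult (gb q n (Suc k) * q ^ Suc k) (Qk q z (Suc k)))"
    by (simp add: sum.distrib algebra_simps)
  also have "\<dots> = (\<Sum>k\<le>Suc n. smult (gb q (Suc n) k) (Qk q z k))"
    by (subst sum.atMost_Suc_shift) (simp add: smult_add_left algebra_simps)
  finally show ?case ..
qed

lemma coeff_lin_pow: "coeff ([:1, R:] ^ n) l = of_nat (n choose l) * R ^ l"
proof (induction n arbitrary: l)
  case 0 then show ?case by (cases l) auto
next
  case (Suc n)
  have e: "[:1, R:] ^ Suc n = [:1,R:] ^ n + pCons 0 (smult R ([:1,R:] ^ n))" by simp
  show ?case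
  proof (cases l)
    case 0 then show ?thesis using Suc.IH[of 0] by (simp add: e)
  next
    case (Suc m)
    then show ?thesis using Suc.IH[of m] Suc.IH[of "Suc m"]
      by (simp add: e algebra_simps)
  qed
qed

definition Pk :: "'a::field \<Rightarrow> nat \<Rightarrow> 'a poly" where
  "Pk q k = (\<Prod>i<k. [:- qnat q i, 1:])"

lemma Pk_Qk: assumes "q \<noteq> 1" shows "smult ((q - 1) ^ k) (Pk q k) = Qk q [:1, q - 1:] k"
proof (induction k)
  case 0 then show ?case by (simp add: Pk_def Qk_def)
next
  case (Suc k)
  have lin: "smult (q - 1) [:- qnat q k, 1:] = [:1, q - 1:] - [:q ^ k:]"
  proof -
    have "1 - q \<noteq> 0" using assms by simp
    hence "(q - 1) * qnat q k = q ^ k - 1" unfolding qnat_def by (simp add: field_simps)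
    thus ?thesis by simp
  qed
  have PS: "Pk q (Suc k) = Pk q k * [:- qnat q k, 1:]" unfolding Pk_def by (rule prod.lessThan_Suc)
  have "smult ((q - 1) ^ Suc k) (Pk q (Suc k)) = smult ((q - 1) ^ k) (Pk q k) * smult (q - 1) [:- qnat q k, 1:]"
    unfolding PS by (simp only: mult_smult_left mult_smult_right smult_smult) (simp add: mult.commute)
  also have "\<dots> = Qk q [:1, q - 1:] (Suc k)" by (simp only: Suc.IH lin Qk_Suc)
  finally show ?case .
qed

lemma prod_smult_poly: "(\<Prod>i\<in>A. smult (c i) (P i)) = smult (\<Prod>i\<in>A. c i) (\<Prod>i\<in>A. P i)"
  by (induction A rule: infinite_finite_induct) (auto simp: mult_ac)

lemma choose2_Suc: "(Suc k choose 2) = (k choose 2) + k"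
  by (simp add: numeral_2_eq_2)

lemma qstirling_Pk: assumes "q \<noteq> 0" shows "qstirling1 q k l = coeff (Pk q k) l"
proof -
  have "q ^ (k choose 2) * (\<Prod>i<k. inverse q ^ i) = 1"
  proof (induction k)
    case (Suc k)
    have "q ^ (Suc k choose 2) * (\<Prod>i<Suc k. inverse q ^ i)
        = (q ^ (k choose 2) * (\<Prod>i<k. inverse q ^ i)) * (q ^ k * inverse q ^ k)"
      by (simp add: choose2_Suc power_add mult_ac)
    also have "\<dots> = 1" using Suc assms by (simp add: power_mult_distrib[symmetric])
    finally show ?case .
  qed (simp add: numeral_2_eq_2)
  thus ?thesis unfolding qstirling1_def Pk_def prod_smult_poly by simp
qed

lemma Pk_coeff_0: assumes "k < l" shows "coeff (Pk q k) l = 0"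
proof -
  have "degree (Pk q k) \<le> (\<Sum>i<k. degree [:- qnat q i, 1:])"
    unfolding Pk_def using degree_prod_sum_le[of "{..<k}" "\<lambda>i. [:- qnat q i, 1:]"] by (simp add: o_def)
  also have "\<dots> = k" by simp
  finally show ?thesis using assms by (intro coeff_eq_0) simp
qed

lemma key_identity:
  fixes q :: "'a::field"
  assumes q1: "q \<noteq> 1" and q0: "q \<noteq> 0" and nr: "\<forall>i\<in>{1..n}. q ^ i \<noteq> 1" and l: "l \<le> n"
  shows "(\<Sum>k=l..n. (q - 1) ^ (k - l) * qbinom q n k * qstirling1 q k l) = of_nat (n choose l)"
proof -
  define R where "R = q - 1"
  have R0: "R \<noteq> 0" using q1 R_def by simp
  have "of_nat (n choose l) * R ^ l = coeff ([:1, R:] ^ n) l" by (simp add: coeff_lin_pow)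
  also have "[:1, R:] ^ n = (\<Sum>k\<le>n. smult (gb q n k) (Qk q [:1,R:] k))"
    by (rule gauss_poly[symmetric])
  also have "\<dots> = (\<Sum>k\<le>n. smult (gb q n k) (smult (R ^ k) (Pk q k)))"
    using Pk_Qk[OF q1] by (simp add: R_def)
  also have "coeff \<dots> l = (\<Sum>k\<le>n. gb q n k * R ^ k * coeff (Pk q k) l)"
    by (simp add: coeff_sum mult_ac)
  also have "\<dots> = (\<Sum>k=l..n. gb q n k * R ^ k * coeff (Pk q k) l)"
    by (rule sum.mono_neutral_right) (auto simp: Pk_coeff_0)
  also have "\<dots> = R ^ l * (\<Sum>k=l..n. (q - 1) ^ (k - l) * qbinom q n k * qstirling1 q k l)"
    unfolding sum_distrib_left
  proof (rule sum.cong)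
    fix k assume k: "k \<in> {l..n}"
    hence "R ^ k = R ^ l * R ^ (k - l)" by (simp add: power_add[symmetric])
    thus "gb q n k * R ^ k * coeff (Pk q k) l = R ^ l * ((q - 1) ^ (k - l) * qbinom q n k * qstirling1 q k l)"
      using k qbinom_gb[OF q1 nr, of k] qstirling_Pk[OF q0] by (simp add: R_def mult_ac)
  qed simp
  finally show ?thesis using R0 by simp
qed




context navq begin

lemma one_plus_qpow_nz: "1 + q ^ l \<noteq> 0"
proof
  assume h: "1 + q ^ l = 0"
  have "v (1 - q ^ l) \<le> v (1 - q)" by (rule one_minus_pow_le) simp
  moreover have "1 - q ^ l = 2" using h by (simp add: algebra_simps eq_neg_iff_add_eq_0)
  ultimately show False using vq1 v_two by simp
qed

lemma wN_conv: "vconv v (\<lambda>N. q ^ (p ^ N)) 1"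
proof (rule vconv_bound)
  show "v (q ^ (p ^ N) - 1) \<le> c0 ^ N" for N using pow_pN[of N] v_diff_sym by metis
  show "(\<lambda>N. c0 ^ N) \<longlonglongrightarrow> 0" by (rule LIMSEQ_power_zero) (use c0_lt1 c0_nn in \<open>simp\<close>)
qed

lemma reorg4: "(C::'b::field) * X / D * m = C * (X * m) / D"
  by (simp add: divide_inverse mult_ac)

lemma reorg2: "(2::'b::field) / A * (P / B * C) = C * P / A / B * (1 + 1)"
  by (simp add: divide_inverse mult_ac)

lemma reorg1: "(a::'b::field) * b * c * d * e / f = (a * e / f) * (b * c * d)"
  by (simp add: divide_inverse mult_ac)

lemma reorg3: "(X::'b::field) * (Y / Z) = X / Z * Y"
  by (simp add: divide_inverse mult_ac)

lemma fermi_sum: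
  fixes Q :: 'a and n M :: nat
  assumes "odd M"
  shows "(\<Sum>y<M. ((1 - Q * q ^ y) / (1 - q)) ^ n * (-1) ^ y)
    = (\<Sum>l\<le>n. of_nat (n choose l) * (- Q) ^ l / (1 - q) ^ n * ((1 + (q ^ M) ^ l) / (1 + q ^ l)))"
proof -
  have geo: "(\<Sum>y<M. (- (q ^ l)) ^ y) = (1 + (q ^ M) ^ l) / (1 + q ^ l)" for l
  proof -
    have "(1 - (- (q ^ l))) * (\<Sum>y<M. (- (q ^ l)) ^ y) = 1 - (- (q ^ l)) ^ M"
      by (rule one_diff_power_eq[symmetric])
    also have "(- (q ^ l)) ^ M = - ((q ^ M) ^ l)"
    proof -
      have a: "(- (q ^ l)) ^ M = - ((q ^ l) ^ M)" by (rule power_minus_odd[OF assms])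
      have b: "(q ^ l) ^ M = (q ^ M) ^ l" by (metis power_mult mult.commute)
      show ?thesis unfolding a b ..
    qed
    finally have "(1 + q ^ l) * (\<Sum>y<M. (- (q ^ l)) ^ y) = 1 + (q ^ M) ^ l" by simp
    thus ?thesis using one_plus_qpow_nz[of l] by (metis nonzero_mult_div_cancel_left)
  qed
  have tm: "((1 - Q * q ^ y) / (1 - q)) ^ n * (-1) ^ y
      = (\<Sum>l\<le>n. of_nat (n choose l) * (- Q) ^ l / (1 - q) ^ n * (- (q ^ l)) ^ y)" for y
  proof -
    have "(1 - Q * q ^ y) ^ n = (- (Q * q ^ y) + 1) ^ n" by simp
    also have "\<dots> = (\<Sum>l\<le>n. of_nat (n choose l) * (- (Q * q ^ y)) ^ l * 1 ^ (n - l))"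
      by (rule binomial_ring)
    finally have b: "(1 - Q * q ^ y) ^ n = (\<Sum>l\<le>n. of_nat (n choose l) * (- (Q * q ^ y)) ^ l)" by simp
    have e: "(- (Q * q ^ y)) ^ l * (-1) ^ y = (- Q) ^ l * (- (q ^ l)) ^ y" for l
    proof -
      have "(- (Q * q ^ y)) ^ l = ((- Q) * q ^ y) ^ l" by (simp only: minus_mult_left)
      also have "\<dots> = (- Q) ^ l * (q ^ y) ^ l" by (rule power_mult_distrib)
      also have "(q ^ y) ^ l = (q ^ l) ^ y" by (metis power_mult mult.commute)
      finally have "(- (Q * q ^ y)) ^ l = (- Q) ^ l * (q ^ l) ^ y" .
      moreover have "(- (q ^ l)) ^ y = (-1) ^ y * (q ^ l) ^ y"
        by (simp add: power_mult_distrib[symmetric])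
      ultimately show ?thesis by (simp only: mult_ac)
    qed
    show ?thesis
      unfolding power_divide b sum_divide_distrib sum_distrib_right
      by (rule sum.cong) (simp_all only: reorg4 e)
  qed
  have "(\<Sum>y<M. ((1 - Q * q ^ y) / (1 - q)) ^ n * (-1) ^ y)
      = (\<Sum>l\<le>n. \<Sum>y<M. of_nat (n choose l) * (- Q) ^ l / (1 - q) ^ n * (- (q ^ l)) ^ y)"
    unfolding tm by (rule sum.swap)
  also have "\<dots> = (\<Sum>l\<le>n. of_nat (n choose l) * (- Q) ^ l / (1 - q) ^ n * ((1 + (q ^ M) ^ l) / (1 + q ^ l)))"
    by (rule sum.cong) (simp_all only: sum_distrib_left[symmetric] geo)
  finally show ?thesis .
qed

lemma main_eq:
  assumes complete: "\<forall>X. vcauchy v X \<longrightarrow> (\<exists>L. vconv v X L)"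
    and x: "x \<in> Zp v" and n: "0 < n" and q1: "q \<noteq> 1"
  shows "qEuler p v q n x =
    2 / (1 - q) ^ n *
    (\<Sum>l=0..n. \<Sum>k=l..n. (-1) ^ l * (q - 1) ^ (k - l) * qbinom q n k * qstirling1 q k l
        * qpow v q (of_nat l * x) / (1 + q ^ l))"
proof -
  define Q where "Q = qpow v q x"
  define c where "c l = of_nat (n choose l) * (- Q) ^ l / (1 - q) ^ n / (1 + q ^ l)" for l
  define L where "L = (\<Sum>l\<le>n. c l * (1 + 1 ^ l))"
  have f: "qint v q (x + of_nat y) ^ n = ((1 - Q * q ^ y) / (1 - q)) ^ n" for y
    unfolding qint_def Q_def qpow_add_nat[OF complete x] ..
  have oddM: "odd (p ^ N)" for N using podd by simp
  have T: "(\<Sum>y<p ^ N. qint v q (x + of_nat y) ^ n * (-1) ^ y) = (\<Sum>l\<le>n. c l * (1 + (q ^ (p ^ N)) ^ l))" for N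
    unfolding f fermi_sum[OF oddM] c_def by (rule sum.cong) (simp_all only: reorg3)
  have conv: "vconv v (\<lambda>N. \<Sum>y<p ^ N. qint v q (x + of_nat y) ^ n * (-1) ^ y) L"
  proof -
    have h: "vconv v (\<lambda>N. c l * (1 + (q ^ (p ^ N)) ^ l)) (c l * (1 + 1 ^ l))" for l
      by (rule vconv_cmult, rule vconv_add[OF vconv_const vconv_power[OF wN_conv]])
    show ?thesis unfolding T L_def by (rule vconv_sum[OF finite_atMost h])
  qed
  have LHS: "qEuler p v q n x = L"
    unfolding qEuler_def fermionic_int_def
  proof (rule the_equality)
    show "vconv v (\<lambda>N. \<Sum>y<p ^ N. qint v q (x + of_nat y) ^ n * (-1) ^ y) L" by (rule conv)
  next
    fix L' assume "vconv v (\<lambda>N. \<Sum>y<p ^ N. qint v q (x + of_nat y) ^ n * (-1) ^ y) L'"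
    thus "L' = L" using conv vconv_unique by blast
  qed
  have nr: "\<forall>i\<in>{1..n}. q ^ i \<noteq> 1"
  proof
    fix i assume "i \<in> {1..n}"
    hence "0 < i" by simp
    thus "q ^ i \<noteq> 1" using no_root[of i] q1 by blast
  qed
  have qp: "qpow v q (of_nat l * x) = Q ^ l" for l unfolding Q_def by (rule qpow_mult_nat[OF complete x])
  have inner: "(\<Sum>k=l..n. (-1) ^ l * (q - 1) ^ (k - l) * qbinom q n k * qstirling1 q k l
        * qpow v q (of_nat l * x) / (1 + q ^ l)) = (-1) ^ l * Q ^ l / (1 + q ^ l) * of_nat (n choose l)"
    if l: "l \<le> n" for l
  proof -
    have "(\<Sum>k=l..n. (-1) ^ l * (q - 1) ^ (k - l) * qbinom q n k * qstirling1 q k l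
        * qpow v q (of_nat l * x) / (1 + q ^ l))
        = (\<Sum>k=l..n. ((-1) ^ l * Q ^ l / (1 + q ^ l)) * ((q - 1) ^ (k - l) * qbinom q n k * qstirling1 q k l))"
      by (rule sum.cong[OF refl]) (simp only: qp reorg1)
    also have "\<dots> = ((-1) ^ l * Q ^ l / (1 + q ^ l)) * (\<Sum>k=l..n. (q - 1) ^ (k - l) * qbinom q n k * qstirling1 q k l)"
      by (rule sum_distrib_left[symmetric])
    also have "\<dots> = (-1) ^ l * Q ^ l / (1 + q ^ l) * of_nat (n choose l)"
      by (simp only: key_identity[OF q1 q_nz nr l])
    finally show ?thesis .
  qed
  have S1: "(\<Sum>l=0..n. \<Sum>k=l..n. (-1) ^ l * (q - 1) ^ (k - l) * qbinom q n k * qstirling1 q k l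
        * qpow v q (of_nat l * x) / (1 + q ^ l))
     = (\<Sum>l\<le>n. (-1) ^ l * Q ^ l / (1 + q ^ l) * of_nat (n choose l))"
    unfolding atLeast0AtMost by (rule sum.cong) (simp_all only: atMost_iff inner)
  have S2: "2 / (1 - q) ^ n * ((-1) ^ l * Q ^ l / (1 + q ^ l) * of_nat (n choose l)) = c l * (1 + 1 ^ l)" for l
  proof -
    have "(- Q) ^ l = (-1) ^ l * Q ^ l" by (rule power_minus)
    thus ?thesis unfolding c_def power_one by (simp only: reorg2)
  qed
  have eq: "2 / (1 - q) ^ n *
    (\<Sum>l=0..n. \<Sum>k=l..n. (-1) ^ l * (q - 1) ^ (k - l) * qbinom q n k * qstirling1 q k l
        * qpow v q (of_nat l * x) / (1 + q ^ l)) = L"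
    unfolding S1 L_def sum_distrib_left S2 ..
  show ?thesis by (rule trans[OF LHS eq[symmetric]])
qed

end

theorem mainTheorem4:
  fixes p :: nat and v :: "'a::field_char_0 \<Rightarrow> real" and q x :: 'a and n :: nat
  assumes "prime p" and "odd p"
    and "is_Cp p v"
    and "v (1 - q) < real p powr (- 1 / (real p - 1))"
    and "0 < n"
    and "x \<in> Zp v"
  shows "qEuler p v q n x =
    2 / (1 - q) ^ n *
    (\<Sum>l=0..n. \<Sum>k=l..n. (-1) ^ l * (q - 1) ^ (k - l) * qbinom q n k * qstirling1 q k l
        * qpow v q (of_nat l * x) / (1 + q ^ l))"
proof -
  have cp: "nonarch_absval p v" "\<forall>X. vcauchy v X \<longrightarrow> (\<exists>L. vconv v X L)"
    using assms(3) unfolding is_Cp_def by blast+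
  interpret navq p v q using cp(1) assms(1,2,4) by unfold_locales auto
  show ?thesis
  proof (cases "q = 1")
    case False
    then show ?thesis by (rule main_eq[OF cp(2) assms(6,5)])
  next
    case True
    have f0: "(\<lambda>y. qint v q (x + of_nat y) ^ n) = (\<lambda>y. 0)"
      using True assms(5) by (simp add: qint_def zero_power)
    have E0: "qEuler p v q n x = 0" unfolding qEuler_def fermionic_int_def f0
    proof (rule the_equality)
      show "vconv v (\<lambda>N. \<Sum>y<p ^ N. 0 * (-1) ^ y) 0" by (simp add: vconv_def)
    next
      fix L assume "vconv v (\<lambda>N. \<Sum>y<p ^ N. (0::'a) * (-1) ^ y) L"
      hence "vconv v (\<lambda>N. 0) L" by simp
      thus "L = 0" by (rule vconv_unique[OF _ vconv_const])
    qed
    have z: "(1 - q) ^ n = 0" using True assms(5) by simp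
    show ?thesis unfolding E0 z by (simp only: div_by_0 mult_zero_left)
  qed
qed

end
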